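(* Assume the standing setting below. Let $I$ be a set independent in both $M$ and $N$ which is dually safe, let $W:=W(M/I,N/I)$ and let $B\in B(M/I,N/I,W)$. Then $I\cup B$ is a nice feasible set which is dually safe.
   Context: Standing setting: $E$ is countable, $M$ is a finitary matroid on $E$ (all circuits finite), $N$ is a matroid on $E$ that is a direct sum of a finitary and a cofinitary matroid (cofinitary = dual is finitary). $E_0$ is the union of the finitary components of $N$ (components = connected components of the circuit hypergraph) and $E_1:=E\setminus E_0$; for $F\subseteq E$, $F^j:=F\cap E_j$. $\mathring{\mathsf{span}}_M(F):=\mathsf{span}_M(F)\setminus F$. $F$ is dually safe if $F^1\subseteq\mathsf{span}_{N^*}(\mathring{\mathsf{span}}_M(F))$. Matroids are possibly infinite; $M/X:=(M^*\upharpoonright(E\setminus X))^*$, $M.X:=M/(E\setminus X)$; $r(K)=0$ means $\varnothing$ is a base of $K$. $W$ is an $(M,N)$-wave if $M\upharpoonright W$ has a base independent in $N.W$; the union of all waves is a wave, $W(M,N)$. $B(M,N,X)$ is the set of common bases of $M\upharpoonright X$ and $N.X$. $\mathsf{cond}(M,N)$: for every wave $W$, $N.W$ has an $M$-independent base; $\mathsf{cond}^+(M,N)$: $W(M,N)$ consists of $M$-loops and $r(N.W(M,N))=0$. A set $I$ independent in $M$ and $N$ is feasible if $\mathsf{cond}(M/I,N/I)$, nice feasible if moreover $\mathsf{cond}^+(M/I,N/I)$. *)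

theory Defs
  imports Main "HOL-Library.Countable_Set"
begin

text \<open>A (possibly infinite) matroid is represented by its ground set and its
independence predicate. The matroid axioms are those of Bruhn et al.
(I1)-(I3) together with (IM).\<close>

type_synonym 'a matroid = "'a set \<times> ('a set \<Rightarrow> bool)"

definition ground :: "'a matroid \<Rightarrow> 'a set" where
  "ground M = fst M"

definition indep :: "'a matroid \<Rightarrow> 'a set \<Rightarrow> bool" where
  "indep M I = snd M I"

definition maxl :: "('a set \<Rightarrow> bool) \<Rightarrow> 'a set \<Rightarrow> bool" where
  "maxl P J \<longleftrightarrow> P J \<and> (\<forall>K. P K \<and> J \<subseteq> K \<longrightarrow> K = J)"

definition base :: "'a matroid \<Rightarrow> 'a set \<Rightarrow> bool" where
  "base M B \<longleftrightarrow> maxl (indep M) B"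

definition matroid :: "'a matroid \<Rightarrow> bool" where
  "matroid M \<longleftrightarrow>
     (\<forall>I. indep M I \<longrightarrow> I \<subseteq> ground M) \<and>
     indep M {} \<and>
     (\<forall>I J. indep M I \<and> J \<subseteq> I \<longrightarrow> indep M J) \<and>
     (\<forall>I I'. indep M I \<and> \<not> base M I \<and> base M I' \<longrightarrow>
        (\<exists>x \<in> I' - I. indep M (insert x I))) \<and>
     (\<forall>I X. indep M I \<and> I \<subseteq> X \<and> X \<subseteq> ground M \<longrightarrow>
        (\<exists>J. maxl (\<lambda>J. indep M J \<and> I \<subseteq> J \<and> J \<subseteq> X) J))"

definition circuit :: "'a matroid \<Rightarrow> 'a set \<Rightarrow> bool" where
  "circuit M C \<longleftrightarrow> C \<subseteq> ground M \<and> \<not> indep M C \<and> (\<forall>D. D \<subset> C \<longrightarrow> indep M D)"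

definition loop :: "'a matroid \<Rightarrow> 'a \<Rightarrow> bool" where
  "loop M e \<longleftrightarrow> circuit M {e}"

definition finitary :: "'a matroid \<Rightarrow> bool" where
  "finitary M \<longleftrightarrow> (\<forall>C. circuit M C \<longrightarrow> finite C)"

definition dual :: "'a matroid \<Rightarrow> 'a matroid" where
  "dual M = (ground M, \<lambda>I. I \<subseteq> ground M \<and> (\<exists>B. base M B \<and> I \<inter> B = {}))"

definition cofinitary :: "'a matroid \<Rightarrow> bool" where
  "cofinitary M \<longleftrightarrow> finitary (dual M)"

definition restrict :: "'a matroid \<Rightarrow> 'a set \<Rightarrow> 'a matroid" where
  "restrict M X = (ground M \<inter> X, \<lambda>I. indep M I \<and> I \<subseteq> X)"

definition contract :: "'a matroid \<Rightarrow> 'a set \<Rightarrow> 'a matroid" where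
  "contract M X = dual (restrict (dual M) (ground M - X))"

definition contract_to :: "'a matroid \<Rightarrow> 'a set \<Rightarrow> 'a matroid" where
  "contract_to M X = contract M (ground M - X)"

definition span :: "'a matroid \<Rightarrow> 'a set \<Rightarrow> 'a set" where
  "span M F = F \<union> {e \<in> ground M. \<exists>C. circuit M C \<and> e \<in> C \<and> C \<subseteq> insert e F}"

definition rank_zero :: "'a matroid \<Rightarrow> bool" where
  "rank_zero K \<longleftrightarrow> base K {}"

definition comp_rel :: "'a matroid \<Rightarrow> ('a \<times> 'a) set" where
  "comp_rel M = Id_on (ground M) \<union>
     (({(e, f). \<exists>C. circuit M C \<and> e \<in> C \<and> f \<in> C})\<^sup>+)"

definition components :: "'a matroid \<Rightarrow> 'a set set" where
  "components M = ground M // comp_rel M"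

definition E0 :: "'a matroid \<Rightarrow> 'a set" where
  "E0 N = \<Union>{K \<in> components N. finitary (restrict N K)}"

definition E1 :: "'a matroid \<Rightarrow> 'a set" where
  "E1 N = ground N - E0 N"

definition fin_cofin_sum :: "'a matroid \<Rightarrow> bool" where
  "fin_cofin_sum N \<longleftrightarrow> (\<exists>A B. A \<union> B = ground N \<and> A \<inter> B = {} \<and>
     (\<forall>I. I \<subseteq> ground N \<longrightarrow> (indep N I \<longleftrightarrow> indep N (I \<inter> A) \<and> indep N (I \<inter> B))) \<and>
     finitary (restrict N A) \<and> cofinitary (restrict N B))"

definition dually_safe :: "'a matroid \<Rightarrow> 'a matroid \<Rightarrow> 'a set \<Rightarrow> bool" where
  "dually_safe M N F \<longleftrightarrow> F \<inter> E1 N \<subseteq> span (dual N) (span M F - F)"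

definition wave :: "'a matroid \<Rightarrow> 'a matroid \<Rightarrow> 'a set \<Rightarrow> bool" where
  "wave M N W \<longleftrightarrow> W \<subseteq> ground M \<and>
     (\<exists>B. base (restrict M W) B \<and> indep (contract_to N W) B)"

definition waveU :: "'a matroid \<Rightarrow> 'a matroid \<Rightarrow> 'a set" where
  "waveU M N = \<Union>{W. wave M N W}"

definition common_bases :: "'a matroid \<Rightarrow> 'a matroid \<Rightarrow> 'a set \<Rightarrow> 'a set set" where
  "common_bases M N X = {B. base (restrict M X) B \<and> base (contract_to N X) B}"

definition cond :: "'a matroid \<Rightarrow> 'a matroid \<Rightarrow> bool" where
  "cond M N \<longleftrightarrow> (\<forall>W. wave M N W \<longrightarrow> (\<exists>B. base (contract_to N W) B \<and> indep M B))"

definition cond_plus :: "'a matroid \<Rightarrow> 'a matroid \<Rightarrow> bool" where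
  "cond_plus M N \<longleftrightarrow> (\<forall>e \<in> waveU M N. loop M e) \<and> rank_zero (contract_to N (waveU M N))"

definition feasible :: "'a matroid \<Rightarrow> 'a matroid \<Rightarrow> 'a set \<Rightarrow> bool" where
  "feasible M N I \<longleftrightarrow> indep M I \<and> indep N I \<and> cond (contract M I) (contract N I)"

definition nice_feasible :: "'a matroid \<Rightarrow> 'a matroid \<Rightarrow> 'a set \<Rightarrow> bool" where
  "nice_feasible M N I \<longleftrightarrow> feasible M N I \<and> cond_plus (contract M I) (contract N I)"

end

theory Submission
  imports Defs
begin


lemma ground_contract: "ground (contract M X) = ground M - X"
  by (auto simp: contract_def dual_def restrict_def ground_def)
lemma ground_dual: "ground (dual M) = ground M"
  by (simp add: dual_def ground_def)
lemma indep_dual: "indep (dual M) D \<longleftrightarrow> D \<subseteq> ground M \<and> (\<exists>B. base M B \<and> D \<inter> B = {})"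
  by (simp add: dual_def indep_def ground_def)
lemma indep_restrict: "indep (restrict M X) J \<longleftrightarrow> indep M J \<and> J \<subseteq> X"
  by (simp add: restrict_def indep_def)
lemma ground_restrict: "ground (restrict M X) = ground M \<inter> X"
  by (simp add: restrict_def ground_def)
lemma base_iff: "base M B \<longleftrightarrow> indep M B \<and> (\<forall>K. indep M K \<and> B \<subseteq> K \<longrightarrow> K = B)"
  by (simp add: base_def maxl_def)
lemma base_restrict_iff: "base (restrict M X) B \<longleftrightarrow> indep M B \<and> B \<subseteq> X \<and> (\<forall>K. indep M K \<and> B \<subseteq> K \<and> K \<subseteq> X \<longrightarrow> K = B)"
  by (auto simp: base_iff indep_restrict)
lemma indep_contract_raw: "indep (contract M X) J \<longleftrightarrow> J \<subseteq> ground M - X \<and>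
   (\<exists>D. base (restrict (dual M) (ground M - X)) D \<and> J \<inter> D = {})"
  unfolding contract_def by (auto simp: indep_dual ground_restrict ground_dual)

lemma mp1: assumes "matroid M" shows "\<forall>I. indep M I \<longrightarrow> I \<subseteq> ground M"
  using assms unfolding matroid_def by (elim conjE)
lemma mp2: assumes "matroid M" shows "indep M {}"
  using assms unfolding matroid_def by (elim conjE)
lemma mp3: assumes "matroid M" shows "\<forall>I J. indep M I \<and> J \<subseteq> I \<longrightarrow> indep M J"
  using assms unfolding matroid_def by (elim conjE)
lemma mp4: assumes "matroid M" shows "\<forall>I I'. indep M I \<and> \<not> base M I \<and> base M I' \<longrightarrow>
        (\<exists>x \<in> I' - I. indep M (insert x I))"
  using assms unfolding matroid_def by (elim conjE)
lemma mp5: assumes "matroid M" shows "\<forall>I X. indep M I \<and> I \<subseteq> X \<and> X \<subseteq> ground M \<longrightarrow>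
        (\<exists>J. maxl (\<lambda>J. indep M J \<and> I \<subseteq> J \<and> J \<subseteq> X) J)"
  using assms unfolding matroid_def by (elim conjE)

lemma m_sub: "matroid M \<Longrightarrow> indep M I \<Longrightarrow> I \<subseteq> ground M"
  using mp1 by blast
lemma m_empty: "matroid M \<Longrightarrow> indep M {}"
  using mp2 by blast
lemma m_mono: "matroid M \<Longrightarrow> indep M I \<Longrightarrow> J \<subseteq> I \<Longrightarrow> indep M J"
  using mp3 by blast
lemma m_aug: "matroid M \<Longrightarrow> indep M I \<Longrightarrow> \<not> base M I \<Longrightarrow> base M I' \<Longrightarrow> \<exists>x\<in>I'-I. indep M (insert x I)"
  using mp4 by blast
lemma m_max: "matroid M \<Longrightarrow> indep M I \<Longrightarrow> I \<subseteq> X \<Longrightarrow> X \<subseteq> ground M \<Longrightarrow>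
  \<exists>J. indep M J \<and> I \<subseteq> J \<and> J \<subseteq> X \<and> (\<forall>K. indep M K \<and> J \<subseteq> K \<and> K \<subseteq> X \<longrightarrow> K = J)"
proof -
  assume a: "matroid M" "indep M I" "I \<subseteq> X" "X \<subseteq> ground M"
  have h: "indep M I \<and> I \<subseteq> X \<and> X \<subseteq> ground M \<longrightarrow> (\<exists>J. maxl (\<lambda>J. indep M J \<and> I \<subseteq> J \<and> J \<subseteq> X) J)"
    by (rule mp5[OF a(1), THEN spec[of _ I], THEN spec[of _ X]])
  have "\<exists>J. maxl (\<lambda>J. indep M J \<and> I \<subseteq> J \<and> J \<subseteq> X) J"
    by (rule mp[OF h conjI[OF a(2) conjI[OF a(3) a(4)]]])
  then obtain J where "maxl (\<lambda>J. indep M J \<and> I \<subseteq> J \<and> J \<subseteq> X) J" by (elim exE)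
  then have m: "indep M J" "I \<subseteq> J" "J \<subseteq> X" "\<forall>K. (indep M K \<and> I \<subseteq> K \<and> K \<subseteq> X) \<and> J \<subseteq> K \<longrightarrow> K = J"
    by (simp_all add: maxl_def)
  have "\<forall>K. indep M K \<and> J \<subseteq> K \<and> K \<subseteq> X \<longrightarrow> K = J"
  proof (intro allI impI)
    fix K assume K: "indep M K \<and> J \<subseteq> K \<and> K \<subseteq> X"
    then have "I \<subseteq> K" using m(2) by (meson subset_trans)
    then show "K = J" using m(4) K by simp
  qed
  then show ?thesis using m(1-3) by (intro exI[of _ J]) simp
qed

lemma base_ext: assumes "matroid M" "indep M I" "I \<subseteq> X" "X \<subseteq> ground M" "base M B0" "B0 \<subseteq> X"
  shows "\<exists>B. base M B \<and> I \<subseteq> B \<and> B \<subseteq> X"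
proof -
  obtain J where J: "indep M J" "I \<subseteq> J" "J \<subseteq> X" "\<forall>K. indep M K \<and> J \<subseteq> K \<and> K \<subseteq> X \<longrightarrow> K = J"
    using m_max[OF assms(1-4)] by blast
  have "base M J"
  proof (rule ccontr)
    assume "\<not> base M J"
    then obtain x where "x \<in> B0 - J" "indep M (insert x J)" using m_aug[OF assms(1) J(1) _ assms(5)] by blast
    then show False using J assms(6) by blast
  qed
  then show ?thesis using J by blast
qed

lemma base_exists: "matroid M \<Longrightarrow> \<exists>B. base M B"
proof -
  assume a: "matroid M"
  obtain J where J: "indep M J" "\<forall>K. indep M K \<and> J \<subseteq> K \<and> K \<subseteq> ground M \<longrightarrow> K = J"
    using m_max[OF a m_empty[OF a], of "ground M"] by blast
  then have "base M J" using m_sub[OF a] by (auto simp: base_iff)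
  then show ?thesis by blast
qed

lemma base_ext2: "matroid M \<Longrightarrow> indep M I \<Longrightarrow> \<exists>B. base M B \<and> I \<subseteq> B"
  using base_exists base_ext[of M I "ground M"] m_sub base_iff by (metis order_refl)

lemma exch: assumes "matroid M" "base M B1" "base M B2" "B1 - B2 \<subseteq> {b}" "g \<in> B2 - B1" "h \<in> B2 - B1"
  shows "g = h"
proof (rule ccontr)
  assume gh: "g \<noteq> h"
  have i: "indep M (B2 - {h})" using m_mono[OF assms(1)] assms(3) base_iff by blast
  have nb: "\<not> base M (B2 - {h})" using assms(3,6) base_iff by blast
  obtain x where x: "x \<in> B1 - (B2 - {h})" "indep M (insert x (B2 - {h}))"
    using m_aug[OF assms(1) i nb assms(2)] by blast
  have "x = b" using x assms(4,6) by blast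
  have "insert g B1 \<subseteq> insert x (B2 - {h})" using assms(4,5,6) gh \<open>x = b\<close> by blast
  then have "indep M (insert g B1)" using m_mono[OF assms(1) x(2)] by blast
  then show False using assms(2,5) base_iff by blast
qed

lemma char: assumes M: "matroid M" and BX: "indep M BX" "BX \<subseteq> X"
   "\<forall>K. indep M K \<and> BX \<subseteq> K \<and> K \<subseteq> X \<longrightarrow> K = BX"
  shows "indep (contract M X) J \<longleftrightarrow> J \<subseteq> ground M - X \<and> indep M (J \<union> BX)"
proof
  assume "indep (contract M X) J"
  then obtain D where J: "J \<subseteq> ground M - X" and D: "base (restrict (dual M) (ground M - X)) D" "J \<inter> D = {}"
    by (auto simp: indep_contract_raw)
  from D(1) have Di: "D \<subseteq> ground M" "D \<subseteq> ground M - X"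
    and Dm: "\<forall>K. indep (dual M) K \<and> D \<subseteq> K \<and> K \<subseteq> ground M - X \<longrightarrow> K = D"
    by (auto simp: base_restrict_iff indep_dual)
  from D(1) obtain B0 where B0: "base M B0" "D \<inter> B0 = {}"
    by (auto simp: base_restrict_iff indep_dual)
  have BXE: "BX \<subseteq> ground M" using m_sub[OF M BX(1)] .
  have "B0 \<subseteq> ground M" using B0 m_sub[OF M] base_iff by blast
  then obtain B where B: "base M B" "BX \<subseteq> B" "B \<subseteq> ground M - D"
    using base_ext[OF M BX(1), of "ground M - D"] BXE BX(2) Di B0 by blast
  have "J \<subseteq> B"
  proof
    fix e assume e: "e \<in> J"
    show "e \<in> B"
    proof (rule ccontr)
      assume "e \<notin> B"
      then have "indep (dual M) (insert e D)" using B e J Di by (auto simp: indep_dual)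
      then have "insert e D = D" using Dm e J Di by blast
      then show False using e D(2) by blast
    qed
  qed
  then show "J \<subseteq> ground M - X \<and> indep M (J \<union> BX)"
    using J B m_mono[OF M] base_iff by (metis Un_subset_iff)
next
  assume a: "J \<subseteq> ground M - X \<and> indep M (J \<union> BX)"
  then obtain B where B: "base M B" "J \<union> BX \<subseteq> B" using base_ext2[OF M] by blast
  have BE: "B \<subseteq> ground M" using B m_sub[OF M] base_iff by blast
  define D where "D = (ground M - X) - B"
  have "base (restrict (dual M) (ground M - X)) D"
    unfolding base_restrict_iff
  proof (intro conjI allI impI)
    show "indep (dual M) D" using B unfolding indep_dual D_def by blast
    show "D \<subseteq> ground M - X" unfolding D_def by blast
    fix K assume K: "indep (dual M) K \<and> D \<subseteq> K \<and> K \<subseteq> ground M - X"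
    then obtain B' where B': "base M B'" "K \<inter> B' = {}" by (auto simp: indep_dual)
    show "K = D"
    proof (rule ccontr)
      assume "K \<noteq> D"
      then obtain e where e: "e \<in> K" "e \<notin> D" using K by blast
      have eB: "e \<in> B" "e \<notin> X" using e K D_def by auto
      have i: "indep M (B - {e})" using m_mono[OF M] B base_iff by blast
      have nb: "\<not> base M (B - {e})" using B eB base_iff by blast
      obtain x where x: "x \<in> B' - (B - {e})" "indep M (insert x (B - {e}))"
        using m_aug[OF M i nb B'(1)] by blast
      have xe: "x \<noteq> e" using x B' e by blast
      have xE: "x \<in> ground M" using x B' m_sub[OF M] base_iff by blast
      have "x \<notin> K" using x B' by blast
      then have "x \<notin> D" using K by blast
      then have xX: "x \<in> X" "x \<notin> B" using xE x xe D_def by auto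
      have "insert x BX \<subseteq> insert x (B - {e})" using B eB BX(2) by blast
      then have "indep M (insert x BX)" using m_mono[OF M x(2)] by blast
      then have "insert x BX = BX" using BX(3) BX(2) xX by blast
      then show False using xX B by blast
    qed
  qed
  moreover have "J \<inter> D = {}" using B D_def by blast
  ultimately have "\<exists>D. base (restrict (dual M) (ground M - X)) D \<and> J \<inter> D = {}" by blast
  then show "indep (contract M X) J" using a unfolding indep_contract_raw by blast
qed

lemma contract_matroid: assumes M: "matroid M" and X: "X \<subseteq> ground M"
  shows "matroid (contract M X)"
proof -
  obtain BX where BX: "indep M BX" "BX \<subseteq> X" "\<forall>K. indep M K \<and> BX \<subseteq> K \<and> K \<subseteq> X \<longrightarrow> K = BX"
    using m_max[OF M m_empty[OF M] _ X] by blast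
  note ch = char[OF M BX]
  have BXE: "BX \<subseteq> ground M" using m_sub[OF M BX(1)] .
  have bc: "base (contract M X) J \<longleftrightarrow> J \<subseteq> ground M - X \<and> base M (J \<union> BX)" for J
  proof
    assume b: "base (contract M X) J"
    then have J: "J \<subseteq> ground M - X" "indep M (J \<union> BX)" by (simp_all add: ch base_iff)
    have mx: "K = J \<union> BX" if K: "indep M K" "J \<union> BX \<subseteq> K" for K
    proof -
      have KE: "K \<subseteq> ground M" using m_sub[OF M K(1)] .
      have "K \<inter> X \<subseteq> K" by blast
      then have "indep M (K \<inter> X)" using m_mono[OF M K(1)] by blast
      moreover have "BX \<subseteq> K \<inter> X" using K BX(2) by blast
      ultimately have KX: "K \<inter> X = BX" using BX(3) by blast
      have "(K - X) \<union> BX = K" using KX by blast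
      then have "indep (contract M X) (K - X)" using KE K(1) by (simp add: ch) blast
      moreover have "J \<subseteq> K - X" using K J by blast
      ultimately have "K - X = J" using b unfolding base_iff by blast
      then show ?thesis using KX by blast
    qed
    then show "J \<subseteq> ground M - X \<and> base M (J \<union> BX)" unfolding base_iff using J mx by blast
  next
    assume a: "J \<subseteq> ground M - X \<and> base M (J \<union> BX)"
    have "indep (contract M X) J" using a by (simp add: ch base_iff)
    moreover have mx: "K = J" if K: "indep (contract M X) K" "J \<subseteq> K" for K
    proof -
      have "indep M (K \<union> BX)" "K \<subseteq> ground M - X" using K(1) by (simp_all add: ch)
      moreover have "J \<union> BX \<subseteq> K \<union> BX" using K(2) by blast
      ultimately have "K \<union> BX = J \<union> BX" using a unfolding base_iff by blast
      then show ?thesis using a \<open>K \<subseteq> ground M - X\<close> BX(2) by blast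
    qed
    ultimately show "base (contract M X) J" unfolding base_iff using mx by blast
  qed
  show ?thesis unfolding matroid_def
  proof (intro conjI allI impI)
    fix J assume "indep (contract M X) J"
    then show "J \<subseteq> ground (contract M X)" by (simp add: ch ground_contract)
  next
    show "indep (contract M X) {}" using BX by (simp add: ch)
  next
    fix I J assume a: "indep (contract M X) I \<and> J \<subseteq> I"
    then have "indep M (I \<union> BX)" "I \<subseteq> ground M - X" by (simp_all add: ch)
    moreover have "J \<union> BX \<subseteq> I \<union> BX" using a by blast
    ultimately show "indep (contract M X) J" using a m_mono[OF M] by (simp add: ch)
  next
    fix I I' assume a: "indep (contract M X) I \<and> \<not> base (contract M X) I \<and> base (contract M X) I'"
    then have i: "indep M (I \<union> BX)" "I \<subseteq> ground M - X" by (simp_all add: ch)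
    have nb: "\<not> base M (I \<union> BX)" using a i bc by blast
    have b': "base M (I' \<union> BX)" "I' \<subseteq> ground M - X" using a bc by blast+
    obtain x where x: "x \<in> (I' \<union> BX) - (I \<union> BX)" "indep M (insert x (I \<union> BX))"
      using m_aug[OF M i(1) nb b'(1)] by blast
    have "insert x I \<subseteq> ground M - X" using x b' i by blast
    then have "indep (contract M X) (insert x I)" using x(2) by (simp add: ch)
    then show "\<exists>x\<in>I' - I. indep (contract M X) (insert x I)" using x by blast
  next
    fix I Y assume a: "indep (contract M X) I \<and> I \<subseteq> Y \<and> Y \<subseteq> ground (contract M X)"
    then have i: "indep M (I \<union> BX)" "I \<subseteq> ground M - X" "Y \<subseteq> ground M - X"
      by (simp_all add: ch ground_contract)
    have "I \<union> BX \<subseteq> Y \<union> BX" "Y \<union> BX \<subseteq> ground M" using a i BXE by blast+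
    then obtain K where K: "indep M K" "I \<union> BX \<subseteq> K" "K \<subseteq> Y \<union> BX"
       "\<forall>K'. indep M K' \<and> K \<subseteq> K' \<and> K' \<subseteq> Y \<union> BX \<longrightarrow> K' = K"
      using m_max[OF M i(1), of "Y \<union> BX"] by blast
    have KJ: "(K - BX) \<union> BX = K" using K by blast
    have "K - BX \<subseteq> ground M - X" using K i by blast
    then have ic: "indep (contract M X) (K - BX)" using K(1) KJ by (simp add: ch)
    show "\<exists>J. maxl (\<lambda>J. indep (contract M X) J \<and> I \<subseteq> J \<and> J \<subseteq> Y) J"
    proof (intro exI)
      show "maxl (\<lambda>J. indep (contract M X) J \<and> I \<subseteq> J \<and> J \<subseteq> Y) (K - BX)"
        unfolding maxl_def
      proof (intro conjI allI impI)
        show "indep (contract M X) (K - BX)" by (rule ic)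
        show "I \<subseteq> K - BX" using K i BX(2) by blast
        show "K - BX \<subseteq> Y" using K by blast
        fix K' assume K': "(indep (contract M X) K' \<and> I \<subseteq> K' \<and> K' \<subseteq> Y) \<and> K - BX \<subseteq> K'"
        then have "indep M (K' \<union> BX)" by (simp add: ch)
        moreover have "K \<subseteq> K' \<union> BX" "K' \<union> BX \<subseteq> Y \<union> BX" using K' K by blast+
        ultimately have "K' \<union> BX = K" using K(4) by blast
        then show "K' = K - BX" using K' i BX(2) by blast
      qed
    qed
  qed
qed

lemma fund_circuit: assumes M: "matroid M" and J: "indep M J" and e: "e \<in> ground M" "e \<notin> J"
  and d: "\<not> indep M (insert e J)"
  shows "\<exists>C. circuit M C \<and> e \<in> C \<and> C \<subseteq> insert e J"
proof -
  obtain BJ where BJ: "base M BJ" "J \<subseteq> BJ" using base_ext2[OF M J] by blast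
  have BJE: "BJ \<subseteq> ground M" using BJ m_sub[OF M] base_iff by blast
  have eBJ: "e \<notin> BJ" using BJ d m_mono[OF M] base_iff by (metis insert_subset)
  define C where "C = insert e {f \<in> J. indep M (insert e (J - {f}))}"
  have CE: "C \<subseteq> ground M" using e m_sub[OF M J] C_def by blast
  have sub: "indep M D" if D: "D \<subset> C" for D
  proof -
    obtain g where g: "g \<in> C" "g \<notin> D" using D by blast
    show ?thesis
    proof (cases "g = e")
      case True
      then have "D \<subseteq> J" using D g C_def by blast
      then show ?thesis using m_mono[OF M J] by blast
    next
      case False
      then have "g \<in> J" "indep M (insert e (J - {g}))" using g C_def by auto
      moreover have "D \<subseteq> insert e (J - {g})" using D g C_def by blast
      ultimately show ?thesis using m_mono[OF M] by blast
    qed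
  qed
  have dep: "\<not> indep M C"
  proof
    assume Ci: "indep M C"
    have CZ: "C \<subseteq> insert e BJ" using C_def BJ by blast
    obtain K where K: "indep M K" "C \<subseteq> K" "K \<subseteq> insert e BJ"
      "\<forall>K'. indep M K' \<and> K \<subseteq> K' \<and> K' \<subseteq> insert e BJ \<longrightarrow> K' = K"
      using m_max[OF M Ci CZ] BJE e by blast
    have Kb: "base M K"
    proof (rule ccontr)
      assume "\<not> base M K"
      then obtain y where "y \<in> BJ - K" "indep M (insert y K)" using m_aug[OF M K(1) _ BJ(1)] by blast
      then show False using K by blast
    qed
    have "\<not> BJ \<subseteq> K"
    proof
      assume "BJ \<subseteq> K"
      then have "insert e J \<subseteq> K" using K C_def BJ by blast
      then show False using d m_mono[OF M K(1)] by blast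
    qed
    then obtain f where f: "f \<in> BJ" "f \<notin> K" by blast
    have KB: "K - BJ \<subseteq> {e}" using K by blast
    have one: "BJ - {f} \<subseteq> K"
    proof
      fix g assume "g \<in> BJ - {f}"
      then show "g \<in> K" using exch[OF M Kb BJ(1) KB, of g f] f by blast
    qed
    show False
    proof (cases "f \<in> J")
      case True
      have "insert e (J - {f}) \<subseteq> K" using one K C_def BJ by blast
      then have "f \<in> C" using m_mono[OF M K(1)] True C_def by blast
      then show False using f K by blast
    next
      case False
      have "insert e J \<subseteq> K" using one K C_def BJ False by blast
      then show False using d m_mono[OF M K(1)] by blast
    qed
  qed
  have "circuit M C" unfolding circuit_def using CE dep sub by blast
  then show ?thesis using C_def by blast
qed


lemma char_indep: assumes M: "matroid M" and X: "indep M X"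
  shows "indep (contract M X) J \<longleftrightarrow> J \<subseteq> ground M - X \<and> indep M (J \<union> X)"
proof -
  have t: "\<forall>K. indep M K \<and> X \<subseteq> K \<and> K \<subseteq> X \<longrightarrow> K = X" by blast
  show ?thesis by (rule char[OF M X subset_refl t])
qed

lemma contract_to_char: assumes M: "matroid M" and W: "W \<subseteq> ground M"
  and C: "indep M C" "C \<subseteq> ground M - W" "\<forall>K. indep M K \<and> C \<subseteq> K \<and> K \<subseteq> ground M - W \<longrightarrow> K = C"
  shows "indep (contract_to M W) J \<longleftrightarrow> J \<subseteq> W \<and> indep M (J \<union> C)"
proof -
  have e: "ground M - (ground M - W) = W" using W by blast
  show ?thesis unfolding contract_to_def using char[OF M C, of J] e by simp
qed

lemma span_mono: "F \<subseteq> G \<Longrightarrow> span M F \<subseteq> span M G"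
  unfolding span_def by blast

lemma mat_eqI: "ground A = ground B \<Longrightarrow> (\<And>J. indep A J = indep B J) \<Longrightarrow> A = B"
  by (cases A, cases B) (auto simp: ground_def indep_def fun_eq_iff)



theorem mainTheorem12:
  fixes M N :: "'a matroid" and E I B :: "'a set"
  assumes "countable E"
    and "matroid M" and "ground M = E" and "finitary M"
    and "matroid N" and "ground N = E" and "fin_cofin_sum N"
    and "indep M I" and "indep N I" and "dually_safe M N I"
    and "B \<in> common_bases (contract M I) (contract N I) (waveU (contract M I) (contract N I))"
  shows "nice_feasible M N (I \<union> B) \<and> dually_safe M N (I \<union> B)"
proof -
  note M = assms(2) and N = assms(5)
  have gM: "ground M = E" and gN: "ground N = E" using assms(3,6) by simp_all
  have IE: "I \<subseteq> E" using m_sub[OF M assms(8)] gM by simp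
  define M' where "M' = contract M I"
  define N' where "N' = contract N I"
  have gM': "ground M' = E - I" unfolding M'_def by (simp add: ground_contract gM)
  have gN': "ground N' = E - I" unfolding N'_def by (simp add: ground_contract gN)
  have mM': "matroid M'" unfolding M'_def using contract_matroid[OF M] IE gM by simp
  have mN': "matroid N'" unfolding N'_def using contract_matroid[OF N] IE gN by simp
  have chM': "indep M' J \<longleftrightarrow> J \<subseteq> E - I \<and> indep M (J \<union> I)" for J
    unfolding M'_def using char_indep[OF M assms(8), of J] gM by simp
  have chN': "indep N' J \<longleftrightarrow> J \<subseteq> E - I \<and> indep N (J \<union> I)" for J
    unfolding N'_def using char_indep[OF N assms(9), of J] gN by simp
  define W where "W = waveU M' N'"
  have WE: "W \<subseteq> E - I" unfolding W_def waveU_def wave_def using gM' by auto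
  have Bc: "base (restrict M' W) B" "base (contract_to N' W) B"
    using assms(11) unfolding common_bases_def M'_def N'_def W_def by auto
  have h1: "indep M' B \<and> B \<subseteq> W \<and> (\<forall>K. indep M' K \<and> B \<subseteq> K \<and> K \<subseteq> W \<longrightarrow> K = B)"
    using Bc(1) unfolding base_restrict_iff .
  then have Bm: "indep M' B" "B \<subseteq> W" and Bmax: "\<forall>K. indep M' K \<and> B \<subseteq> K \<and> K \<subseteq> W \<longrightarrow> K = B"
    by blast+
  have BE: "B \<subseteq> E - I" using Bm WE by blast
  obtain C0 where C0: "indep N' C0" "C0 \<subseteq> (E-I) - W" "\<forall>K. indep N' K \<and> C0 \<subseteq> K \<and> K \<subseteq> (E-I)-W \<longrightarrow> K = C0"
    using m_max[OF mN' m_empty[OF mN'], of "(E-I)-W"] gN' by auto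
  have chNW: "indep (contract_to N' W) J \<longleftrightarrow> J \<subseteq> W \<and> indep N' (J \<union> C)"
    if "indep N' C" "C \<subseteq> (E-I) - W" "\<forall>K. indep N' K \<and> C \<subseteq> K \<and> K \<subseteq> (E-I)-W \<longrightarrow> K = C" for C J
    using contract_to_char[OF mN', of W C J] that WE gN' by simp
  have iBW: "indep (contract_to N' W) B" using Bc(2) unfolding base_iff by (rule conjunct1)
  have h2: "(B \<subseteq> W \<and> indep N' (B \<union> C0)) \<and> (\<forall>K. (K \<subseteq> W \<and> indep N' (K \<union> C0)) \<and> B \<subseteq> K \<longrightarrow> K = B)"
    using Bc(2) unfolding base_iff chNW[OF C0] .
  then have BN: "indep N' (B \<union> C0)" and BNmax: "\<forall>K. (K \<subseteq> W \<and> indep N' (K \<union> C0)) \<and> B \<subseteq> K \<longrightarrow> K = B"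
    by blast+
  have BiN: "indep N' B" using m_mono[OF mN' BN] by blast
  have iMIB: "indep M (I \<union> B)" using Bm(1) chM' by (simp add: Un_commute)
  have iNIB: "indep N (I \<union> B)" using BiN chN' by (simp add: Un_commute)
  define M'' where "M'' = contract M' B"
  define N'' where "N'' = contract N' B"
  have gM'': "ground M'' = E - I - B" unfolding M''_def by (simp add: ground_contract gM')
  have gN'': "ground N'' = E - I - B" unfolding N''_def by (simp add: ground_contract gN')
  have mM'': "matroid M''" unfolding M''_def using contract_matroid[OF mM'] BE gM' by simp
  have mN'': "matroid N''" unfolding N''_def using contract_matroid[OF mN'] BE gN' by simp
  have chM'': "indep M'' J \<longleftrightarrow> J \<subseteq> E - I - B \<and> indep M' (J \<union> B)" for J
    unfolding M''_def using char_indep[OF mM' Bm(1), of J] gM' by simp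
  have chN'': "indep N'' J \<longleftrightarrow> J \<subseteq> E - I - B \<and> indep N' (J \<union> B)" for J
    unfolding N''_def using char_indep[OF mN' BiN, of J] gN' by simp
  have eqM: "contract M (I \<union> B) = M''"
  proof (rule mat_eqI)
    show "ground (contract M (I \<union> B)) = ground M''" using gM'' gM by (auto simp: ground_contract)
    fix J
    have a: "indep (contract M (I \<union> B)) J = (J \<subseteq> E - (I \<union> B) \<and> indep M (J \<union> (I \<union> B)))"
      using char_indep[OF M iMIB, of J] gM by simp
    have b: "indep M'' J = (J \<subseteq> E - I - B \<and> (J \<union> B \<subseteq> E - I \<and> indep M ((J \<union> B) \<union> I)))"
      using chM'' chM' by simp
    have c: "J \<union> (I \<union> B) = (J \<union> B) \<union> I" by blast
    show "indep (contract M (I \<union> B)) J = indep M'' J"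
      unfolding a b c using BE by blast
  qed
  have eqN: "contract N (I \<union> B) = N''"
  proof (rule mat_eqI)
    show "ground (contract N (I \<union> B)) = ground N''" using gN'' gN by (auto simp: ground_contract)
    fix J
    have a: "indep (contract N (I \<union> B)) J = (J \<subseteq> E - (I \<union> B) \<and> indep N (J \<union> (I \<union> B)))"
      using char_indep[OF N iNIB, of J] gN by simp
    have b: "indep N'' J = (J \<subseteq> E - I - B \<and> (J \<union> B \<subseteq> E - I \<and> indep N ((J \<union> B) \<union> I)))"
      using chN'' chN' by simp
    have c: "J \<union> (I \<union> B) = (J \<union> B) \<union> I" by blast
    show "indep (contract N (I \<union> B)) J = indep N'' J"
      unfolding a b c using BE by blast
  qed
  have key: "waveU M'' N'' \<subseteq> W - B"
  proof
    fix e assume "e \<in> waveU M'' N''"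
    then obtain W' where W': "wave M'' N'' W'" "e \<in> W'" unfolding waveU_def by blast
    then have W'E: "W' \<subseteq> E - I - B" using gM'' unfolding wave_def by blast
    from W' obtain B' where B': "base (restrict M'' W') B'" "indep (contract_to N'' W') B'"
      unfolding wave_def by blast
    have h3: "indep M'' B' \<and> B' \<subseteq> W' \<and> (\<forall>K. indep M'' K \<and> B' \<subseteq> K \<and> K \<subseteq> W' \<longrightarrow> K = B')"
      using B'(1) unfolding base_restrict_iff .
    then have B'm: "indep M'' B'" "B' \<subseteq> W'" and B'max: "\<forall>K. indep M'' K \<and> B' \<subseteq> K \<and> K \<subseteq> W' \<longrightarrow> K = B'"
      by blast+
    have wv: "wave M' N' (W \<union> W')"
      unfolding wave_def
    proof (intro conjI exI)
      show "W \<union> W' \<subseteq> ground M'" using WE W'E gM' by blast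
      show "base (restrict M' (W \<union> W')) (B \<union> B')"
        unfolding base_restrict_iff
      proof (intro conjI allI impI)
        show iBB: "indep M' (B \<union> B')" using B'm(1) chM'' by (simp add: Un_commute)
        show "B \<union> B' \<subseteq> W \<union> W'" using Bm B'm by blast
        fix K assume K: "indep M' K \<and> B \<union> B' \<subseteq> K \<and> K \<subseteq> W \<union> W'"
        have "K \<subseteq> B \<union> B'"
        proof
          fix x assume x: "x \<in> K"
          show "x \<in> B \<union> B'"
          proof (cases "x \<in> W")
            case True
            have "insert x B \<subseteq> K" using x K by blast
            then have "indep M' (insert x B)" using m_mono[OF mM'] K by blast
            then have "insert x B = B" using Bmax True Bm(2) by blast
            then show ?thesis by blast
          next
            case False
            then have xW': "x \<in> W'" using x K by blast
            have "insert x B' \<union> B \<subseteq> K" using x K by blast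
            then have "indep M' (insert x B' \<union> B)" using m_mono[OF mM'] K by blast
            moreover have "insert x B' \<subseteq> E - I - B" using xW' B'm(2) W'E by blast
            ultimately have "indep M'' (insert x B')" unfolding chM'' by blast
            then have "insert x B' = B'" using B'max xW' B'm(2) by blast
            then show ?thesis by blast
          qed
        qed
        then show "K = B \<union> B'" using K by blast
      qed
      obtain C where C: "indep N' C" "C \<subseteq> (E-I) - (W \<union> W')"
        "\<forall>K. indep N' K \<and> C \<subseteq> K \<and> K \<subseteq> (E-I) - (W \<union> W') \<longrightarrow> K = C"
        using m_max[OF mN' m_empty[OF mN'], of "(E-I) - (W \<union> W')"] gN' by auto
      have chC: "indep (contract_to N' (W \<union> W')) J \<longleftrightarrow> J \<subseteq> W \<union> W' \<and> indep N' (J \<union> C)" for J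
        using contract_to_char[OF mN', of "W \<union> W'" C J] C WE W'E gN' by auto
      have hC: "C \<subseteq> (E-I) - W" using C(2) by blast
      have hG: "(E-I) - W \<subseteq> ground N'" using gN' by blast
      obtain C1 where C1: "indep N' C1" "C \<subseteq> C1" "C1 \<subseteq> (E-I) - W"
        "\<forall>K. indep N' K \<and> C1 \<subseteq> K \<and> K \<subseteq> (E-I) - W \<longrightarrow> K = C1"
        using m_max[OF mN' C(1) hC hG] by (elim exE conjE)
      have "indep N' (B \<union> C1)" using iBW unfolding chNW[OF C1(1,3,4)] by blast
      then have "indep N' (C \<union> B)" using m_mono[OF mN'] C1(2) by blast
      moreover have "C \<subseteq> E - I - B" using C(2) Bm(2) by blast
      ultimately have iC: "indep N'' C" unfolding chN'' by blast
      obtain C2 where C2: "indep N'' C2" "C \<subseteq> C2" "C2 \<subseteq> (E-I-B) - W'"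
        "\<forall>K. indep N'' K \<and> C2 \<subseteq> K \<and> K \<subseteq> (E-I-B) - W' \<longrightarrow> K = C2"
      proof -
        have hC2: "C \<subseteq> (E-I-B) - W'" using C(2) Bm(2) by blast
        have hG2: "(E-I-B) - W' \<subseteq> ground N''" using gN'' by blast
        show ?thesis using m_max[OF mN'' iC hC2 hG2] that by (elim exE conjE)
      qed
      have chB2: "indep (contract_to N'' W') J \<longleftrightarrow> J \<subseteq> W' \<and> indep N'' (J \<union> C2)" for J
        using contract_to_char[OF mN'', of W' C2 J] C2 W'E gN'' by auto
      have "indep N'' (B' \<union> C2)" using B'(2) unfolding chB2 by blast
      then have "indep N' (B' \<union> C2 \<union> B)" using chN''[of "B' \<union> C2"] by blast
      moreover have "(B \<union> B') \<union> C \<subseteq> B' \<union> C2 \<union> B" using C2(2) by blast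
      ultimately have "indep N' ((B \<union> B') \<union> C)" by (rule m_mono[OF mN'])
      then show "indep (contract_to N' (W \<union> W')) (B \<union> B')" unfolding chC using Bm(2) B'm(2) by blast
    qed
    then have "W \<union> W' \<subseteq> W" unfolding W_def waveU_def by blast
    then show "e \<in> W - B" using W' W'E by blast
  qed
  have loops: "loop M'' e" if e: "e \<in> W - B" for e
    unfolding loop_def circuit_def
  proof (intro conjI allI impI)
    show "{e} \<subseteq> ground M''" using e WE gM'' by auto
    show "\<not> indep M'' {e}"
    proof
      assume "indep M'' {e}"
      then have "indep M' (insert e B)" using chM'' by simp
      then have "insert e B = B" using Bmax e Bm(2) by blast
      then show False using e by blast
    qed
    fix D assume "D \<subset> {e}" then have "D = {}" by blast
    then show "indep M'' D" using m_empty[OF mM''] by simp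
  qed
  have "C0 \<subseteq> E - I - B" using C0(2) Bm(2) by blast
  moreover have "C0 \<union> B = B \<union> C0" by blast
  ultimately have iC0: "indep N'' C0" using BN unfolding chN'' by simp
  have rz: "base (contract_to N'' U) {}" if U: "U \<subseteq> W - B" for U
  proof -
    obtain C2 where C2: "indep N'' C2" "C0 \<subseteq> C2" "C2 \<subseteq> (E-I-B) - U"
        "\<forall>K. indep N'' K \<and> C2 \<subseteq> K \<and> K \<subseteq> (E-I-B) - U \<longrightarrow> K = C2"
    proof -
      have hC2: "C0 \<subseteq> (E-I-B) - U" using C0(2) U Bm(2) by blast
      have hG2: "(E-I-B) - U \<subseteq> ground N''" using gN'' by blast
      show ?thesis using m_max[OF mN'' iC0 hC2 hG2] that by (elim exE conjE)
    qed
    have ch2: "indep (contract_to N'' U) J \<longleftrightarrow> J \<subseteq> U \<and> indep N'' (J \<union> C2)" for J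
    proof -
      have "U \<subseteq> ground N''" using U WE gN'' by blast
      moreover have "ground N'' - U = (E-I-B) - U" using gN'' by simp
      ultimately show ?thesis using contract_to_char[OF mN'', of U C2 J] C2 by simp
    qed
    show ?thesis unfolding base_iff
    proof (intro conjI allI impI)
      show "indep (contract_to N'' U) {}" using ch2 C2 by simp
      fix K assume K: "indep (contract_to N'' U) K \<and> {} \<subseteq> K"
      show "K = {}"
      proof (rule ccontr)
        assume "K \<noteq> {}" then obtain e where e: "e \<in> K" by blast
        have KU: "K \<subseteq> U" "indep N'' (K \<union> C2)" using K ch2 by simp_all
        then have "indep N'' (insert e C2)" using m_mono[OF mN''] e by blast
        then have "indep N' (insert e C2 \<union> B)" using chN''[of "insert e C2"] by blast
        then have "indep N' (insert e B \<union> C0)" by (rule m_mono[OF mN']) (insert C2(2), blast)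
        moreover have "insert e B \<subseteq> W" using e KU U Bm(2) by blast
        ultimately have "insert e B = B" using BNmax by blast
        then show False using e KU U by blast
      qed
    qed
  qed
  have cnd: "cond M'' N''" unfolding cond_def
  proof (intro allI impI)
    fix W' assume "wave M'' N'' W'"
    then have "W' \<subseteq> W - B" using key unfolding waveU_def by blast
    then show "\<exists>Bx. base (contract_to N'' W') Bx \<and> indep M'' Bx" using rz m_empty[OF mM''] by blast
  qed
  have cndp: "cond_plus M'' N''" unfolding cond_plus_def rank_zero_def using key loops rz by blast
  define S where "S = span M (I \<union> B) - (I \<union> B)"
  have SI: "span M I - I \<subseteq> S"
  proof
    fix y assume y: "y \<in> span M I - I"
    have "y \<in> span M (I \<union> B)" using y span_mono[of I "I \<union> B" M] by blast
    moreover have "y \<notin> B"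
    proof
      assume yB: "y \<in> B"
      then obtain C where C: "circuit M C" "C \<subseteq> insert y I" using y unfolding span_def by blast
      then have "C \<subseteq> I \<union> B" using yB by blast
      then have "indep M C" using m_mono[OF M iMIB] by blast
      then show False using C(1) unfolding circuit_def by blast
    qed
    ultimately show "y \<in> S" using y unfolding S_def by blast
  qed
  have WBS: "W - B \<subseteq> S"
  proof
    fix e assume e: "e \<in> W - B"
    have eE: "e \<in> ground M" "e \<notin> I \<union> B" using e WE gM by auto
    have "\<not> indep M (insert e (I \<union> B))"
    proof
      assume a: "indep M (insert e (I \<union> B))"
      have "insert e B \<subseteq> E - I" using e WE BE by blast
      moreover have "insert e B \<union> I = insert e (I \<union> B)" by blast
      ultimately have "indep M' (insert e B)" using chM' a by simp
      then show False using Bmax e Bm by blast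
    qed
    then obtain C where "circuit M C" "e \<in> C" "C \<subseteq> insert e (I \<union> B)"
      using fund_circuit[OF M iMIB eE] by blast
    then show "e \<in> S" unfolding S_def span_def using eE by blast
  qed
  define Bg where "Bg = I \<union> B \<union> C0"
  have "indep N ((B \<union> C0) \<union> I)" using BN unfolding chN' by blast
  then have iBg: "indep N Bg" unfolding Bg_def by (simp add: Un_ac)
  have BgE: "Bg \<subseteq> E" using m_sub[OF N iBg] gN by simp
  have bBg: "base N Bg" unfolding base_iff
  proof (intro conjI allI impI)
    show "indep N Bg" by (rule iBg)
    fix K assume K: "indep N K \<and> Bg \<subseteq> K"
    have "K \<subseteq> Bg"
    proof
      fix x assume x: "x \<in> K"
      show "x \<in> Bg"
      proof (rule ccontr)
        assume xB: "x \<notin> Bg"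
        have xE: "x \<in> E - I" using x K m_sub[OF N] gN xB Bg_def by blast
        show False
        proof (cases "x \<in> W")
          case True
          have "insert x B \<union> C0 \<union> I \<subseteq> K" using x K Bg_def by blast
          then have "indep N (insert x B \<union> C0 \<union> I)" by (rule m_mono[OF N conjunct1[OF K]])
          moreover have "insert x B \<union> C0 \<subseteq> E - I" using xE BE C0(2) by blast
          ultimately have "indep N' (insert x B \<union> C0)" unfolding chN' by blast
          moreover have "insert x B \<subseteq> W" using True Bm(2) by blast
          ultimately have "insert x B = B" using BNmax by blast
          then show False using xB Bg_def by blast
        next
          case False
          have "insert x C0 \<union> I \<subseteq> K" using x K Bg_def by blast
          then have "indep N (insert x C0 \<union> I)" by (rule m_mono[OF N conjunct1[OF K]])
          moreover have "insert x C0 \<subseteq> E - I" using xE C0(2) by blast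
          ultimately have "indep N' (insert x C0)" unfolding chN' by blast
          moreover have "insert x C0 \<subseteq> (E - I) - W" using xE False C0(2) by blast
          ultimately have "insert x C0 = C0" using C0(3) by blast
          then show False using xB Bg_def by blast
        qed
      qed
    qed
    then show "K = Bg" using K by blast
  qed
  have gb: "base N (insert g (Bg - {b}))" if gbh: "b \<in> Bg" "g \<in> E - Bg" "indep N (insert g (Bg - {b}))" for b g
  proof (rule ccontr)
    assume nb: "\<not> base N (insert g (Bg - {b}))"
    obtain x where x: "x \<in> Bg - insert g (Bg - {b})" "indep N (insert x (insert g (Bg - {b})))"
      using m_aug[OF N gbh(3) nb bBg] by blast
    have "x = b" using x by blast
    then have "insert g Bg \<subseteq> insert x (insert g (Bg - {b}))" by blast
    then have "indep N (insert g Bg)" by (rule m_mono[OF N x(2)])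
    then show False using bBg gbh(2) unfolding base_iff by blast
  qed
  have dsB: "b \<in> span (dual N) S" if b: "b \<in> B" for b
  proof -
    define C where "C = insert b {f \<in> E - Bg. indep N (insert f (Bg - {b}))}"
    have bBg': "b \<in> Bg" "b \<notin> I" "b \<notin> C0" "b \<in> E" using b Bg_def BE C0(2) Bm(2) by auto
    have CS: "C \<subseteq> insert b S"
    proof
      fix f assume f: "f \<in> C"
      show "f \<in> insert b S"
      proof (cases "f = b")
        case False
        then have f1: "f \<in> E - Bg" "indep N (insert f (Bg - {b}))" using f C_def by auto
        have "f \<in> W"
        proof (rule ccontr)
          assume fW: "f \<notin> W"
          have "insert f C0 \<union> I \<subseteq> insert f (Bg - {b})" using bBg' Bg_def by blast
          then have "indep N (insert f C0 \<union> I)" by (rule m_mono[OF N f1(2)])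
          moreover have "insert f C0 \<subseteq> E - I" using f1 C0(2) Bg_def by blast
          ultimately have "indep N' (insert f C0)" unfolding chN' by blast
          moreover have "insert f C0 \<subseteq> (E - I) - W" using f1 fW C0(2) Bg_def by blast
          ultimately have "insert f C0 = C0" using C0(3) by blast
          then show False using f1 Bg_def by blast
        qed
        then have "f \<in> W - B" using f1 Bg_def by blast
        then show ?thesis using WBS by blast
      qed simp
    qed
    have circ: "circuit (dual N) C"
      unfolding circuit_def ground_dual
    proof (intro conjI allI impI)
      show "C \<subseteq> ground N" using C_def bBg' gN by auto
      show "\<not> indep (dual N) C"
      proof
        assume "indep (dual N) C"
        then obtain D where D: "base N D" "C \<inter> D = {}" unfolding indep_dual by blast
        have i: "indep N (Bg - {b})" using m_mono[OF N iBg] by blast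
        have nb: "\<not> base N (Bg - {b})" using bBg bBg' unfolding base_iff by blast
        obtain y where y: "y \<in> D - (Bg - {b})" "indep N (insert y (Bg - {b}))"
          using m_aug[OF N i nb D(1)] by blast
        have "y \<noteq> b" using y D C_def by blast
        moreover have "y \<in> E" using y D m_sub[OF N] gN unfolding base_iff by blast
        ultimately have "y \<in> C" using y C_def by blast
        then show False using y D by blast
      qed
      fix D' assume D': "D' \<subset> C"
      then obtain g where g: "g \<in> C" "g \<notin> D'" by blast
      have D'E: "D' \<subseteq> ground N" using D' C_def bBg' gN by auto
      show "indep (dual N) D'"
      proof (cases "g = b")
        case True
        have "D' \<inter> Bg = {}" using D' g True C_def by blast
        then show ?thesis unfolding indep_dual using D'E bBg by blast
      next
        case False
        then have g1: "g \<in> E - Bg" "indep N (insert g (Bg - {b}))" using g C_def by auto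
        have "base N (insert g (Bg - {b}))" using gb[OF bBg'(1) g1] .
        moreover have "D' \<inter> insert g (Bg - {b}) = {}" using D' g C_def by blast
        ultimately show ?thesis unfolding indep_dual using D'E by blast
      qed
    qed
    show ?thesis unfolding span_def ground_dual using circ CS bBg' gN C_def by blast
  qed
  have ds: "dually_safe M N (I \<union> B)"
    unfolding dually_safe_def
  proof
    fix x assume x: "x \<in> (I \<union> B) \<inter> E1 N"
    show "x \<in> span (dual N) (span M (I \<union> B) - (I \<union> B))"
    proof (cases "x \<in> B")
      case True
      then show ?thesis using dsB S_def by blast
    next
      case False
      then have "x \<in> I \<inter> E1 N" using x by blast
      then have "x \<in> span (dual N) (span M I - I)" using assms(10) unfolding dually_safe_def by blast
      then show ?thesis using span_mono[OF SI] S_def by blast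
    qed
  qed
  have "nice_feasible M N (I \<union> B)"
    unfolding nice_feasible_def feasible_def eqM eqN
    using iMIB iNIB cnd cndp by blast
  then show ?thesis using ds by blast
qed

end
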